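(* If $H$ is a disjoint union of $n$ cycles (each of length at least $3$) having $20$ vertices in total, with adjacency matrix $A$, then the matrix $B(H)=-\frac4{15}A+I+\frac7{45}(J-I-A)$ has rank $21-n$.
   Context: $I$ is the identity matrix and $J$ the all-ones $20\times20$ matrix. *)

theory Defs
  imports "HOL-Analysis.Analysis"
begin

definition is_disjoint_union_of_cycles :: "('v \<Rightarrow> 'v \<Rightarrow> bool) \<Rightarrow> nat \<Rightarrow> bool" where
  "is_disjoint_union_of_cycles E n \<longleftrightarrow>
     (\<exists>(c :: nat \<Rightarrow> nat \<Rightarrow> 'v) (len :: nat \<Rightarrow> nat).
        (\<forall>i<n. 3 \<le> len i \<and> inj_on (c i) {0..<len i}) \<and>
        (\<forall>i<n. \<forall>j<n. i \<noteq> j \<longrightarrow> c i ` {0..<len i} \<inter> c j ` {0..<len j} = {}) \<and>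
        (\<Union>i<n. c i ` {0..<len i}) = UNIV \<and>
        (\<forall>u v. E u v \<longleftrightarrow>
           (\<exists>i<n. \<exists>k<len i. {u, v} = {c i k, c i ((k + 1) mod len i)})))"

definition adjacency_matrix :: "('v::finite \<Rightarrow> 'v \<Rightarrow> bool) \<Rightarrow> real^'v^'v" where
  "adjacency_matrix E = (\<chi> i j. if E i j then 1 else 0)"

definition all_ones :: "real^'v::finite^'v" where
  "all_ones = (\<chi> i j. 1)"

end

theory Submission
  imports Defs
begin

locale cycles =
  fixes E :: "20 \<Rightarrow> 20 \<Rightarrow> bool" and n :: nat and c :: "nat \<Rightarrow> nat \<Rightarrow> 20" and len :: "nat \<Rightarrow> nat"
  assumes len3: "\<And>i. i<n \<Longrightarrow> 3 \<le> len i"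
    and injc: "\<And>i. i<n \<Longrightarrow> inj_on (c i) {0..<len i}"
    and disj: "\<And>i j. i<n \<Longrightarrow> j<n \<Longrightarrow> i \<noteq> j \<Longrightarrow> c i ` {0..<len i} \<inter> c j ` {0..<len j} = {}"
    and cover: "(\<Union>i<n. c i ` {0..<len i}) = UNIV"
    and adj: "\<And>u v. E u v \<longleftrightarrow> (\<exists>i<n. \<exists>k<len i. {u, v} = {c i k, c i ((k + 1) mod len i)})"
begin

definition "cyc v = (SOME i. i < n \<and> v \<in> c i ` {0..<len i})"
definition "pos v = (SOME k. k < len (cyc v) \<and> c (cyc v) k = v)"

lemma cyc: "cyc v < n \<and> v \<in> c (cyc v) ` {0..<len (cyc v)}"
proof -
  have "\<exists>i. i < n \<and> v \<in> c i ` {0..<len i}" using cover by blast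
  then show ?thesis unfolding cyc_def by (rule someI_ex)
qed

lemma pos: "pos v < len (cyc v)" "c (cyc v) (pos v) = v"
proof -
  have "\<exists>k. k < len (cyc v) \<and> c (cyc v) k = v" using cyc[of v] by auto
  then have "pos v < len (cyc v) \<and> c (cyc v) (pos v) = v" unfolding pos_def by (rule someI_ex)
  then show "pos v < len (cyc v)" "c (cyc v) (pos v) = v" by auto
qed

lemma uniq: assumes "i<n" "j<n" "k<len i" "m<len j" "c i k = c j m" shows "i = j \<and> k = m"
proof -
  have "i = j"
  proof (rule ccontr)
    assume "i \<noteq> j"
    then have "c i ` {0..<len i} \<inter> c j ` {0..<len j} = {}" using disj[OF assms(1,2)] by blast
    moreover have "c i k \<in> c i ` {0..<len i}" using assms(3) by simp
    moreover have "c j m \<in> c j ` {0..<len j}" using assms(4) by simp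
    ultimately show False using assms(5) by auto
  qed
  then show ?thesis using injc[of i] assms by (auto dest: inj_onD)
qed

lemma cyc_eq: assumes "i<n" "k<len i" shows "cyc (c i k) = i" "pos (c i k) = k"
  using uniq[OF cyc[THEN conjunct1] assms(1) pos(1) assms(2) pos(2)] by auto

lemma len_pos: "len (cyc v) \<ge> 3" using len3 cyc by blast

definition "succ v = c (cyc v) ((pos v + 1) mod len (cyc v))"
definition "pred v = c (cyc v) ((pos v + len (cyc v) - 1) mod len (cyc v))"

lemma succ_cp: "cyc (succ v) = cyc v" "pos (succ v) = (pos v + 1) mod len (cyc v)"
proof -
  have "(pos v + 1) mod len (cyc v) < len (cyc v)" using len_pos[of v] by simp
  then show "cyc (succ v) = cyc v" "pos (succ v) = (pos v + 1) mod len (cyc v)"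
    unfolding succ_def using cyc_eq[of "cyc v"] cyc by auto
qed

lemma pred_cp: "cyc (pred v) = cyc v" "pos (pred v) = (pos v + len (cyc v) - 1) mod len (cyc v)"
proof -
  have "(pos v + len (cyc v) - 1) mod len (cyc v) < len (cyc v)" using len_pos[of v] by simp
  then show "cyc (pred v) = cyc v" "pos (pred v) = (pos v + len (cyc v) - 1) mod len (cyc v)"
    unfolding pred_def using cyc_eq[of "cyc v"] cyc by auto
qed

lemma modlem1: "(p::nat) < L \<Longrightarrow> 3 \<le> L \<Longrightarrow> ((p + L - 1) mod L + 1) mod L = p"
  by (cases p) (auto simp: mod_Suc)

lemma modlem2: "(p::nat) < L \<Longrightarrow> 3 \<le> L \<Longrightarrow> ((p + 1) mod L + L - 1) mod L = p"
  by (cases "p + 1 = L") (auto simp: mod_Suc)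

lemma cpe: "c (cyc v) (pos v) = v" by (rule pos(2))

lemma succ_pred: "succ (pred v) = v"
  unfolding succ_def[of "pred v"] pred_cp using modlem1[OF pos(1) len_pos] cpe by simp

lemma pred_succ: "pred (succ v) = v"
  unfolding pred_def[of "succ v"] succ_cp using modlem2[OF pos(1) len_pos] cpe by simp

lemma modlem3: assumes "(p::nat) < L" "3 \<le> L" shows "(p + 1) mod L \<noteq> (p + L - 1) mod L"
proof (cases "p + 1 = L")
  case True
  then have "(p + L - 1) mod L = L - 2"
  proof -
    have "p + L - 1 = (L - 2) + L" using True assms by simp
    then have "(p + L - 1) mod L = (L - 2) mod L" by simp
    also have "\<dots> = L - 2" using assms by simp
    finally show ?thesis .
  qed
  then show ?thesis using True assms by auto
next
  case False
  then have l: "(p + 1) mod L = p + 1" using assms by simp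
  show ?thesis
  proof (cases p)
    case 0 then show ?thesis using assms l by simp
  next
    case (Suc q)
    then have "p + L - 1 = q + L" by simp
    then have "(p + L - 1) mod L = q mod L" by simp
    also have "\<dots> = q" using assms Suc by simp
    finally have "(p + L - 1) mod L = q" .
    then show ?thesis using l Suc by simp
  qed
qed

lemma succ_ne_pred: "succ v \<noteq> pred v"
proof
  assume "succ v = pred v"
  then have "pos (succ v) = pos (pred v)" by simp
  then have "(pos v + 1) mod len (cyc v) = (pos v + len (cyc v) - 1) mod len (cyc v)"
    unfolding succ_cp(2) pred_cp(2) .
  then show False using modlem3[OF pos(1)[of v] len_pos[of v]] by simp
qed


lemma E_iff: "E u w \<longleftrightarrow> w = succ u \<or> w = pred u"
proof
  assume "E u w"
  then obtain i k where ik: "i<n" "k<len i" "{u, w} = {c i k, c i ((k + 1) mod len i)}" using adj by blast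
  define a where "a = c i k"
  have sa: "succ a = c i ((k + 1) mod len i)" unfolding a_def succ_def using cyc_eq[OF ik(1,2)] by simp
  have "{u, w} = {a, succ a}" using ik(3) sa a_def by simp
  then have "(u = a \<and> w = succ a) \<or> (u = succ a \<and> w = a)" by (simp add: doubleton_eq_iff)
  then show "w = succ u \<or> w = pred u" using pred_succ by auto
next
  assume "w = succ u \<or> w = pred u"
  then show "E u w"
  proof
    assume w: "w = succ u"
    have "{u, w} = {c (cyc u) (pos u), c (cyc u) ((pos u + 1) mod len (cyc u))}"
      using w cpe succ_def by simp
    then show "E u w" unfolding adj using cyc pos(1) by blast
  next
    assume w: "w = pred u"
    have "{u, w} = {c (cyc w) (pos w), c (cyc w) ((pos w + 1) mod len (cyc w))}"
      using w cpe succ_def[of w] succ_pred[of u] by auto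
    then show "E u w" unfolding adj using cyc pos(1) by blast
  qed
qed

lemma sum_succ: "(\<Sum>u\<in>UNIV. f (succ u)) = (\<Sum>u\<in>UNIV. f u)"
  by (rule sum.reindex_bij_witness[of _ pred succ]) (auto simp: succ_pred pred_succ)

lemma sum_pred: "(\<Sum>u\<in>UNIV. f (pred u)) = (\<Sum>u\<in>UNIV. f u)"
  by (rule sum.reindex_bij_witness[of _ succ pred]) (auto simp: succ_pred pred_succ)

definition "MM = (- (4/15)) *\<^sub>R adjacency_matrix E + mat 1 + (7/45) *\<^sub>R (all_ones - mat 1 - adjacency_matrix E)"

lemma MM_entry: "MM $ u $ w = 7/45 + (if u = w then 38/45 else 0) - (if E u w then 19/45 else 0)"
  unfolding MM_def adjacency_matrix_def all_ones_def mat_def by auto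

lemma sum_adj: "(\<Sum>w\<in>UNIV. (if E u w then f w else 0)) = f (succ u) + f (pred u)"
proof -
  have "(\<Sum>w\<in>UNIV. (if E u w then f w else 0)) = sum f {w\<in>UNIV. E u w}"
    by (rule sum.inter_filter[symmetric]) simp
  also have "{w\<in>UNIV. E u w} = {succ u, pred u}" using E_iff by auto
  also have "sum f {succ u, pred u} = f (succ u) + f (pred u)" using succ_ne_pred by simp
  finally show ?thesis .
qed

lemma MM_mult: "(MM *v x) $ u = (7/45) * sum (($) x) UNIV + (38/45) * x$u - (19/45) * (x$(succ u) + x$(pred u))"
proof -
  have "(MM *v x) $ u = (\<Sum>w\<in>UNIV. MM $ u $ w * x $ w)" by (simp add: matrix_vector_mult_def)
  also have "\<dots> = (\<Sum>w\<in>UNIV. (7/45) * x$w + (if u = w then (38/45) * x$w else 0) - (19/45) * (if E u w then x$w else 0))"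
    unfolding MM_entry by (intro sum.cong) (auto simp: algebra_simps)
  also have "\<dots> = (7/45) * sum (($) x) UNIV + (38/45) * x$u - (19/45) * (\<Sum>w\<in>UNIV. (if E u w then x$w else 0))"
    by (simp add: sum.distrib sum_subtractf sum_distrib_left)
  also have "\<dots> = (7/45) * sum (($) x) UNIV + (38/45) * x$u - (19/45) * (x$(succ u) + x$(pred u))"
    using sum_adj[of u "\<lambda>w. x$w"] by simp
  finally show ?thesis .
qed


lemma ker_char: "MM *v x = 0 \<longleftrightarrow> (\<forall>v. x$(succ v) = x$v) \<and> sum (($) x) UNIV = 0"
proof
  assume h: "(\<forall>v. x$(succ v) = x$v) \<and> sum (($) x) UNIV = 0"
  have "x$(pred v) = x$v" for v using h succ_pred[of v] by metis
  then show "MM *v x = 0" using h by (simp add: vec_eq_iff MM_mult)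
next
  assume h: "MM *v x = 0"
  define s where "s = sum (($) x) UNIV"
  have comp: "(7/45) * s + (38/45) * x$u - (19/45) * (x$(succ u) + x$(pred u)) = 0" for u
    using h MM_mult[of x u] s_def by (simp add: vec_eq_iff)
  have "(\<Sum>u\<in>UNIV. (7/45) * s + (38/45) * x$u - (19/45) * (x$(succ u) + x$(pred u))) = 0"
    using comp by (intro sum.neutral) blast
  moreover have "(\<Sum>u\<in>UNIV. (7/45) * s + (38/45) * x$u - (19/45) * (x$(succ u) + x$(pred u)))
     = 20 * (7/45) * s + (38/45) * s - (19/45) * (s + s)"
  proof -
    have g: "\<And>(A::real) (B::20\<Rightarrow>real) (C::20\<Rightarrow>real). (\<Sum>u\<in>(UNIV::20 set). A + B u - C u) = 20 * A + (\<Sum>u\<in>UNIV. B u) - (\<Sum>u\<in>UNIV. C u)"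
      by (simp add: sum.distrib sum_subtractf)
    have b: "(\<Sum>u\<in>UNIV. (38/45) * x$u) = (38/45) * s" unfolding s_def by (simp add: sum_distrib_left)
    have c: "(\<Sum>u\<in>UNIV. (19/45) * (x$(succ u) + x$(pred u))) = (19/45) * (s + s)"
      unfolding s_def sum_distrib_left[symmetric] sum.distrib
      using sum_succ[of "\<lambda>u. x$u"] sum_pred[of "\<lambda>u. x$u"] by simp
    show ?thesis unfolding g b c by simp
  qed
  ultimately have s0: "s = 0" by simp
  then have two: "x$(succ u) + x$(pred u) = 2 * x$u" for u using comp[of u] by simp
  have "(\<Sum>u\<in>UNIV. (x$u - x$(succ u))^2) = (\<Sum>u\<in>UNIV. x$u * (2 * x$u - x$(succ u) - x$(pred u)))"
  proof -
    have a: "(\<Sum>u\<in>UNIV. (x$(succ u))^2) = (\<Sum>u\<in>UNIV. (x$u)^2)" by (rule sum_succ)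
    have b: "(\<Sum>u\<in>UNIV. x$(succ u) * x$(pred (succ u))) = (\<Sum>u\<in>UNIV. x$u * x$(pred u))"
      by (rule sum_succ[of "\<lambda>u. x$u * x$(pred u)"])
    have "(\<Sum>u\<in>UNIV. (x$u - x$(succ u))^2) = (\<Sum>u\<in>UNIV. (x$u)^2) - 2 * (\<Sum>u\<in>UNIV. x$u * x$(succ u)) + (\<Sum>u\<in>UNIV. (x$(succ u))^2)"
      by (simp add: power2_diff sum.distrib sum_subtractf sum_distrib_left mult.assoc)
    also have "\<dots> = 2 * (\<Sum>u\<in>UNIV. (x$u)^2) - (\<Sum>u\<in>UNIV. x$u * x$(succ u)) - (\<Sum>u\<in>UNIV. x$u * x$(pred u))"
      using a b by (simp add: pred_succ mult.commute)
    also have "\<dots> = (\<Sum>u\<in>UNIV. x$u * (2 * x$u - x$(succ u) - x$(pred u)))"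
      by (simp add: sum.distrib sum_subtractf sum_distrib_left algebra_simps power2_eq_square)
    finally show ?thesis .
  qed
  also have "\<dots> = 0" using two by (simp add: algebra_simps)
  finally have "(\<Sum>u\<in>UNIV. (x$u - x$(succ u))^2) = 0" .
  then have "\<forall>u\<in>UNIV. (x$u - x$(succ u))^2 = 0" by (subst (asm) sum_nonneg_eq_0_iff) auto
  then show "(\<forall>v. x$(succ v) = x$v) \<and> sum (($) x) UNIV = 0" using s0 s_def by auto
qed


definition "S = {x::real^20. \<forall>v. x$(succ v) = x$v}"
definition "chi i = (\<chi> v. if cyc v = i then (1::real) else 0)"

lemma subspace_S: "subspace S"
  unfolding subspace_def S_def by simp

lemma succ_c: assumes "i<n" "k+1 < len i" shows "succ (c i k) = c i (k+1)"
  unfolding succ_def using cyc_eq[of i k] assms by simp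

lemma S_const: assumes "x \<in> S" shows "x$v = x$(c (cyc v) 0)"
proof -
  have "\<forall>k<len i. x$(c i k) = x$(c i 0)" if i: "i<n" for i
  proof (intro allI impI)
    fix k assume "k < len i"
    then show "x$(c i k) = x$(c i 0)"
    proof (induction k)
      case 0 then show ?case by simp
    next
      case (Suc k)
      then have "x$(c i (Suc k)) = x$(succ (c i k))" using succ_c[OF i, of k] by simp
      also have "\<dots> = x$(c i k)" using assms S_def by simp
      finally show ?case using Suc by simp
    qed
  qed
  then show ?thesis using cyc[of v] pos[of v] by metis
qed

lemma chi_S: "chi i \<in> S"
  unfolding S_def chi_def by (simp add: succ_cp)

lemma chi_c: assumes "i<n" "j<n" shows "chi j $ (c i 0) = (if i = j then 1 else 0)"
proof -
  have "cyc (c i 0) = i" using cyc_eq[of i 0] assms len3[of i] by simp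
  then show ?thesis unfolding chi_def by simp
qed

lemma S_span: "S = span (chi ` {..<n})"
proof
  show "span (chi ` {..<n}) \<subseteq> S"
    using subspace_S chi_S by (intro span_minimal) auto
next
  show "S \<subseteq> span (chi ` {..<n})"
  proof
    fix x assume x: "x \<in> S"
    have "x = (\<Sum>i<n. (x$(c i 0)) *\<^sub>R chi i)"
    proof (subst vec_eq_iff, intro allI)
      fix v
      have "(\<Sum>i<n. (x$(c i 0)) *\<^sub>R chi i) $ v = (\<Sum>i<n. (if i = cyc v then x$(c i 0) else 0))"
        unfolding sum_component chi_def by (intro sum.cong) auto
      also have "\<dots> = x$(c (cyc v) 0)" using cyc[of v] by simp
      finally show "x $ v = (\<Sum>i<n. (x$(c i 0)) *\<^sub>R chi i) $ v" using S_const[OF x] by simp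
    qed
    also have "\<dots> \<in> span (chi ` {..<n})"
      by (intro span_sum span_mul span_base) auto
    finally show "x \<in> span (chi ` {..<n})" .
  qed
qed

lemma chi_inj: "inj_on chi {..<n}"
proof
  fix i j assume "i \<in> {..<n}" "j \<in> {..<n}" "chi i = chi j"
  then have "chi i $ (c i 0) = chi j $ (c i 0)" by simp
  then show "i = j" using chi_c \<open>i \<in> {..<n}\<close> \<open>j \<in> {..<n}\<close> by (auto split: if_splits)
qed

lemma chi_indep: "independent (chi ` {..<n})"
  unfolding independent_explicit
proof (intro conjI allI impI ballI)
  show "finite (chi ` {..<n})" by simp
next
  fix u v assume h: "(\<Sum>v\<in>chi ` {..<n}. u v *\<^sub>R v) = 0" and v: "v \<in> chi ` {..<n}"
  then obtain j where j: "j < n" "v = chi j" by auto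
  have "(\<Sum>i<n. u (chi i) *\<^sub>R chi i) = 0" using h by (simp add: sum.reindex[OF chi_inj])
  then have "(\<Sum>i<n. u (chi i) *\<^sub>R chi i) $ (c j 0) = 0" by simp
  moreover have "(\<Sum>i<n. u (chi i) *\<^sub>R chi i) $ (c j 0) = (\<Sum>i<n. if j = i then u (chi i) else 0)"
    unfolding sum_component using chi_c[OF j(1)] by (intro sum.cong) auto
  ultimately show "u v = 0" using j by simp
qed

lemma dim_S: "dim S = n"
  unfolding S_span dim_span dim_eq_card_independent[OF chi_indep] card_image[OF chi_inj] by simp


definition "onev = (\<chi> v. (1::real) :: real^20)"

lemma MM_sym: "MM $ u $ w = MM $ w $ u"
  unfolding MM_entry by (auto simp: E_iff succ_pred pred_succ)

lemma MM_adj: "(MM *v z) \<bullet> y = z \<bullet> (MM *v y)"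
proof -
  have "(MM *v z) \<bullet> y = (\<Sum>u\<in>UNIV. \<Sum>w\<in>UNIV. MM$u$w * z$w * y$u)"
    by (simp add: inner_vec_def matrix_vector_mult_def sum_distrib_right)
  also have "\<dots> = (\<Sum>w\<in>UNIV. \<Sum>u\<in>UNIV. MM$u$w * z$w * y$u)" by (rule sum.swap)
  also have "\<dots> = z \<bullet> (MM *v y)"
    by (simp add: inner_vec_def matrix_vector_mult_def sum_distrib_left MM_sym mult.commute mult.left_commute)
  finally show ?thesis .
qed

lemma orth_range: "{y \<in> UNIV. \<forall>x \<in> range (\<lambda>z. MM *v z). orthogonal x y} = {x. MM *v x = 0}"
proof safe
  fix y assume "\<forall>x \<in> range (\<lambda>z. MM *v z). orthogonal x y"
  then have "orthogonal (MM *v (MM *v y)) y" by blast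
  then have "(MM *v y) \<bullet> (MM *v y) = 0" unfolding orthogonal_def MM_adj .
  then show "MM *v y = 0" by simp
next
  fix y z assume "MM *v y = 0"
  then show "orthogonal (MM *v z) y" unfolding orthogonal_def MM_adj by simp
qed simp

lemma ker_S: "{y \<in> S. \<forall>x \<in> span {onev}. orthogonal x y} = {x. MM *v x = 0}"
proof -
  have o: "onev \<bullet> y = sum (($) y) UNIV" for y by (simp add: onev_def inner_vec_def)
  have "(\<forall>x \<in> span {onev}. orthogonal x y) \<longleftrightarrow> sum (($) y) UNIV = 0" for y
  proof
    assume "\<forall>x \<in> span {onev}. orthogonal x y"
    then have "orthogonal onev y" using span_base[of onev "{onev}"] by blast
    then show "sum (($) y) UNIV = 0" using o unfolding orthogonal_def by simp
  next
    assume h: "sum (($) y) UNIV = 0"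
    show "\<forall>x \<in> span {onev}. orthogonal x y"
      unfolding span_singleton orthogonal_def using h o by auto
  qed
  then show ?thesis using ker_char unfolding S_def by auto
qed

lemma dim_ker: "dim {x. MM *v x = 0} + 1 = n"
proof -
  have one_S: "onev \<in> S" unfolding S_def onev_def by simp
  have "onev \<noteq> 0" unfolding onev_def by (simp add: vec_eq_iff)
  then have d1: "dim (span {onev}) = 1" by simp
  have "dim {y \<in> S. \<forall>x \<in> span {onev}. orthogonal x y} + dim (span {onev}) = dim S"
    by (rule dim_subspace_orthogonal_to_vectors[OF subspace_span subspace_S span_minimal]) (use one_S subspace_S in auto)
  then show ?thesis using d1 dim_S ker_S by simp
qed

lemma dim_range: "dim {x. MM *v x = 0} + dim (range (\<lambda>z. MM *v z)) = 20"
proof -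
  have "dim {y \<in> UNIV. \<forall>x \<in> range (\<lambda>z. MM *v z). orthogonal x y} + dim (range (\<lambda>z. MM *v z)) = dim (UNIV :: (real^20) set)"
    by (rule dim_subspace_orthogonal_to_vectors[OF linear_subspace_image[OF matrix_vector_mul_linear subspace_UNIV] subspace_UNIV]) simp
  then show ?thesis using orth_range by simp
qed

lemma rank_MM: "rank MM = 21 - n"
  using dim_range dim_ker rank_dim_range[of MM] by simp

end

theorem mainTheorem15:
  fixes E :: "20 \<Rightarrow> 20 \<Rightarrow> bool" and n :: nat
  assumes "is_disjoint_union_of_cycles E n"
  shows "rank ((- (4/15)) *\<^sub>R adjacency_matrix E + mat 1
            + (7/45) *\<^sub>R (all_ones - mat 1 - adjacency_matrix E)) = 21 - n"
proof -
  obtain c :: "nat \<Rightarrow> nat \<Rightarrow> 20" and len where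
    h0: "(\<forall>i<n. 3 \<le> len i \<and> inj_on (c i) {0..<len i})
       \<and> (\<forall>i<n. \<forall>j<n. i \<noteq> j \<longrightarrow> c i ` {0..<len i} \<inter> c j ` {0..<len j} = {})
       \<and> (\<Union>i<n. c i ` {0..<len i}) = UNIV
       \<and> (\<forall>u v. E u v \<longleftrightarrow> (\<exists>i<n. \<exists>k<len i. {u, v} = {c i k, c i ((k + 1) mod len i)}))"
    using assms unfolding is_disjoint_union_of_cycles_def by (elim exE) (rule that)
  note h = h0[THEN conjunct1] h0[THEN conjunct2, THEN conjunct1] h0[THEN conjunct2, THEN conjunct2, THEN conjunct1] h0[THEN conjunct2, THEN conjunct2, THEN conjunct2]
  interpret cycles E n c len
  proof
    show "\<And>i. i < n \<Longrightarrow> 3 \<le> len i" using h(1) by blast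
    show "\<And>i. i < n \<Longrightarrow> inj_on (c i) {0..<len i}" using h(1) by blast
    show "\<And>i j. i < n \<Longrightarrow> j < n \<Longrightarrow> i \<noteq> j \<Longrightarrow> c i ` {0..<len i} \<inter> c j ` {0..<len j} = {}"
      using h(2) by blast
    show "(\<Union>i<n. c i ` {0..<len i}) = UNIV" by (rule h(3))
    show "\<And>u v. E u v \<longleftrightarrow> (\<exists>i<n. \<exists>k<len i. {u, v} = {c i k, c i ((k + 1) mod len i)})"
      using h(4) by blast
  qed
  show ?thesis using rank_MM unfolding MM_def .
qed

end
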